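(* Let $\mathcal D=\{\mathbf D_i:i\in I\}$ be a class of upwards-closed dependency notions, and for each $i\in I$ let $\gamma_i:\mathbb N\to\mathbb N$ be such that $\mathbf D_i$ is $\gamma_i$-bounded. Let $\phi\in\mathbf{FO}(\mathcal D)$ be a formula in which each $\mathbf D_i$ occurs $k_i$ times, and let $\nu_\phi(n)=\sum_{i\in I}k_i\gamma_i(n)$. Then for all finite structures $\mathfrak M$ and all teams $X$: if $\mathfrak M\models_X\phi$, then there exists $Y\subseteq X$ with $|Y|\le\nu_\phi(|M|)$ and $\mathfrak M\models_Y\phi$.
   Context: Team semantics (lax version). For a structure $\mathfrak M$ with domain $M$, a team $X$ is a (possibly empty) set of assignments $s:V\to M$, $V$ a finite set of variables; $X(\vec v)=\{s(\vec v):s\in X\}$. Satisfaction for formulas in negation normal form: first-order literal $\alpha$: every $s\in X$ satisfies $\alpha$ (Tarski); $\psi\vee\theta$: $X=Y\cup Z$ with $\mathfrak M\models_Y\psi$, $\mathfrak M\models_Z\theta$; $\psi\wedge\theta$: both; $\exists v\psi$: some $F:X\to\mathcal P(M)\setminus\{\emptyset\}$ with $\mathfrak M\models_{X[F/v]}\psi$, $X[F/v]=\{s[m/v]:s\in X,m\in F(s)\}$; $\forall v\psi$: $\mathfrak M\models_{X[M/v]}\psi$, $X[M/v]=\{s[m/v]:s\in X,m\in M\}$. A $k$-ary dependency notion $\mathbf D$ is an isomorphism-closed class of structures $(M,R)$, $R$ a $k$-ary relation; the atom $\mathbf D\vec v$ satisfies $\mathfrak M\models_X\mathbf D\vec v$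 iff $(M,X(\vec v))\in\mathbf D$. $\mathbf D$ is upwards-closed if $(M,R)\in\mathbf D$, $R\subseteq S$ imply $(M,S)\in\mathbf D$. For $\gamma:\mathbb N\to\mathbb N$, $\mathbf D$ is $\gamma$-bounded if for all finite structures $\mathfrak M$, teams $X$ and tuples $\vec v$, whenever $\mathfrak M\models_X\mathbf D\vec v$ there is $Y\subseteq X$ with $|Y|\le\gamma(|M|)$ and $\mathfrak M\models_Y\mathbf D\vec v$. $\mathbf{FO}(\mathcal D)$ is first-order logic in negation normal form extended with the atoms $\mathbf D\vec v$ for $\mathbf D\in\mathcal D$. *)

theory Defs
  imports Main
begin

datatype ('f, 'v) trm = Var 'v | Fn 'f "('f, 'v) trm list"

datatype ('f, 'r, 'i, 'v) fml =
    Eq "('f, 'v) trm" "('f, 'v) trm"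
  | NEq "('f, 'v) trm" "('f, 'v) trm"
  | Rel 'r "('f, 'v) trm list"
  | NRel 'r "('f, 'v) trm list"
  | Dep 'i "'v list"
  | Conj "('f, 'r, 'i, 'v) fml" "('f, 'r, 'i, 'v) fml"
  | Disj "('f, 'r, 'i, 'v) fml" "('f, 'r, 'i, 'v) fml"
  | Ex 'v "('f, 'r, 'i, 'v) fml"
  | All 'v "('f, 'r, 'i, 'v) fml"

fun fvt :: "('f, 'v) trm \<Rightarrow> 'v set" where
  "fvt (Var v) = {v}"
| "fvt (Fn f ts) = (\<Union>t\<in>set ts. fvt t)"

primrec fv :: "('f, 'r, 'i, 'v) fml \<Rightarrow> 'v set" where
  "fv (Eq t u) = fvt t \<union> fvt u"
| "fv (NEq t u) = fvt t \<union> fvt u"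
| "fv (Rel r ts) = (\<Union>t\<in>set ts. fvt t)"
| "fv (NRel r ts) = (\<Union>t\<in>set ts. fvt t)"
| "fv (Dep i vs) = set vs"
| "fv (Conj p q) = fv p \<union> fv q"
| "fv (Disj p q) = fv p \<union> fv q"
| "fv (Ex v p) = fv p - {v}"
| "fv (All v p) = fv p - {v}"

primrec occ :: "'i \<Rightarrow> ('f, 'r, 'i, 'v) fml \<Rightarrow> nat" where
  "occ i (Eq t u) = 0"
| "occ i (NEq t u) = 0"
| "occ i (Rel r ts) = 0"
| "occ i (NRel r ts) = 0"
| "occ i (Dep j vs) = (if i = j then 1 else 0)"
| "occ i (Conj p q) = occ i p + occ i q"
| "occ i (Disj p q) = occ i p + occ i q"
| "occ i (Ex v p) = occ i p"
| "occ i (All v p) = occ i p"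

primrec deps :: "('f, 'r, 'i, 'v) fml \<Rightarrow> 'i set" where
  "deps (Eq t u) = {}"
| "deps (NEq t u) = {}"
| "deps (Rel r ts) = {}"
| "deps (NRel r ts) = {}"
| "deps (Dep j vs) = {j}"
| "deps (Conj p q) = deps p \<union> deps q"
| "deps (Disj p q) = deps p \<union> deps q"
| "deps (Ex v p) = deps p"
| "deps (All v p) = deps p"

primrec wf_deps :: "('i \<Rightarrow> nat) \<Rightarrow> ('f, 'r, 'i, 'v) fml \<Rightarrow> bool" where
  "wf_deps ar (Eq t u) = True"
| "wf_deps ar (NEq t u) = True"
| "wf_deps ar (Rel r ts) = True"
| "wf_deps ar (NRel r ts) = True"
| "wf_deps ar (Dep j vs) = (length vs = ar j)"
| "wf_deps ar (Conj p q) = (wf_deps ar p \<and> wf_deps ar q)"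
| "wf_deps ar (Disj p q) = (wf_deps ar p \<and> wf_deps ar q)"
| "wf_deps ar (Ex v p) = wf_deps ar p"
| "wf_deps ar (All v p) = wf_deps ar p"

text \<open>A structure is given by its domain M, interpretations of function symbols FN and of
  relation symbols RL. Assignments are finite partial maps from variables to elements.\<close>

definition is_structure :: "'m set \<Rightarrow> ('f \<Rightarrow> 'm list \<Rightarrow> 'm) \<Rightarrow> bool" where
  "is_structure M FN \<longleftrightarrow> M \<noteq> {} \<and> (\<forall>f xs. set xs \<subseteq> M \<longrightarrow> FN f xs \<in> M)"

fun evalt :: "('f \<Rightarrow> 'm list \<Rightarrow> 'm) \<Rightarrow> ('v \<rightharpoonup> 'm) \<Rightarrow> ('f, 'v) trm \<Rightarrow> 'm" where
  "evalt FN s (Var v) = the (s v)"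
| "evalt FN s (Fn f ts) = FN f (map (evalt FN s) ts)"

definition is_team :: "'m set \<Rightarrow> 'v set \<Rightarrow> ('v \<rightharpoonup> 'm) set \<Rightarrow> bool" where
  "is_team M V X \<longleftrightarrow> finite V \<and> (\<forall>s\<in>X. dom s = V \<and> ran s \<subseteq> M)"

definition tuples :: "('v \<rightharpoonup> 'm) set \<Rightarrow> 'v list \<Rightarrow> 'm list set" where
  "tuples X vs = (\<lambda>s. map (\<lambda>v. the (s v)) vs) ` X"

section \<open>Lax team semantics\<close>

primrec sat :: "'m set \<Rightarrow> ('f \<Rightarrow> 'm list \<Rightarrow> 'm) \<Rightarrow> ('r \<Rightarrow> 'm list \<Rightarrow> bool)
    \<Rightarrow> ('i \<Rightarrow> 'm set \<Rightarrow> 'm list set \<Rightarrow> bool)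
    \<Rightarrow> ('v \<rightharpoonup> 'm) set \<Rightarrow> ('f, 'r, 'i, 'v) fml \<Rightarrow> bool" where
  "sat M FN RL D X (Eq t u) = (\<forall>s\<in>X. evalt FN s t = evalt FN s u)"
| "sat M FN RL D X (NEq t u) = (\<forall>s\<in>X. evalt FN s t \<noteq> evalt FN s u)"
| "sat M FN RL D X (Rel r ts) = (\<forall>s\<in>X. RL r (map (evalt FN s) ts))"
| "sat M FN RL D X (NRel r ts) = (\<forall>s\<in>X. \<not> RL r (map (evalt FN s) ts))"
| "sat M FN RL D X (Dep i vs) = D i M (tuples X vs)"
| "sat M FN RL D X (Conj p q) = (sat M FN RL D X p \<and> sat M FN RL D X q)"
| "sat M FN RL D X (Disj p q) =
     (\<exists>Y Z. X = Y \<union> Z \<and> sat M FN RL D Y p \<and> sat M FN RL D Z q)"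
| "sat M FN RL D X (Ex v p) =
     (\<exists>F. (\<forall>s\<in>X. F s \<subseteq> M \<and> F s \<noteq> {}) \<and>
          sat M FN RL D {s(v \<mapsto> m) | s m. s \<in> X \<and> m \<in> F s} p)"
| "sat M FN RL D X (All v p) =
     sat M FN RL D {s(v \<mapsto> m) | s m. s \<in> X \<and> m \<in> M} p"

text \<open>A k-ary dependency notion Dn (a class of structures (M,R), R \<subseteq> M^k), represented
  over the element type 'm, is isomorphism closed.\<close>
definition dep_notion :: "nat \<Rightarrow> ('m set \<Rightarrow> 'm list set \<Rightarrow> bool) \<Rightarrow> bool" where
  "dep_notion k Dn \<longleftrightarrow>
     (\<forall>M R. Dn M R \<longrightarrow> R \<subseteq> {xs. length xs = k \<and> set xs \<subseteq> M}) \<and>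
     (\<forall>M M' h R. bij_betw h M M' \<longrightarrow> R \<subseteq> {xs. length xs = k \<and> set xs \<subseteq> M} \<longrightarrow>
         (Dn M R \<longleftrightarrow> Dn M' (map h ` R)))"

definition upwards_closed :: "nat \<Rightarrow> ('m set \<Rightarrow> 'm list set \<Rightarrow> bool) \<Rightarrow> bool" where
  "upwards_closed k Dn \<longleftrightarrow>
     (\<forall>M R S. Dn M R \<longrightarrow> R \<subseteq> S \<longrightarrow> S \<subseteq> {xs. length xs = k \<and> set xs \<subseteq> M} \<longrightarrow> Dn M S)"

text \<open>gamma-boundedness, quantifying over all finite structures, teams (with variables of
  type 'v) and k-tuples of variables.\<close>
definition gamma_bounded ::
  "'v itself \<Rightarrow> nat \<Rightarrow> ('m set \<Rightarrow> 'm list set \<Rightarrow> bool) \<Rightarrow> (nat \<Rightarrow> nat) \<Rightarrow> bool" where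
  "gamma_bounded _ k Dn \<gamma> \<longleftrightarrow>
     (\<forall>M V (X :: ('v \<rightharpoonup> 'm) set) vs.
        finite M \<and> M \<noteq> {} \<and> is_team M V X \<and> set vs \<subseteq> V \<and> length vs = k \<and>
        Dn M (tuples X vs) \<longrightarrow>
        (\<exists>Y\<subseteq>X. card Y \<le> \<gamma> (card M) \<and> Dn M (tuples Y vs)))"

text \<open>nu_phi(n) = sum over i of k_i * gamma_i(n), k_i = number of occurrences of D_i in phi
  (only indices occurring in phi contribute nonzero terms).\<close>
definition nu :: "('i \<Rightarrow> nat \<Rightarrow> nat) \<Rightarrow> ('f, 'r, 'i, 'v) fml \<Rightarrow> nat \<Rightarrow> nat" where
  "nu \<gamma> \<phi> n = (\<Sum>i\<in>deps \<phi>. occ i \<phi> * \<gamma> i n)"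

end

theory Submission
  imports Defs
begin

lemma occ_notin: "i \<notin> deps \<phi> \<Longrightarrow> occ i \<phi> = 0"
  by (induction \<phi>) auto

lemma finite_deps: "finite (deps \<phi>)"
  by (induction \<phi>) auto

lemma nu_sup:
  assumes "finite S" "deps \<phi> \<subseteq> S"
  shows "nu \<gamma> \<phi> n = (\<Sum>i\<in>S. occ i \<phi> * \<gamma> i n)"
  unfolding nu_def
  by (rule sum.mono_neutral_left) (use assms occ_notin in auto)

lemma nu_conj: "nu \<gamma> (Conj p q) n = nu \<gamma> p n + nu \<gamma> q n"
proof -
  let ?S = "deps p \<union> deps q"
  have f: "finite ?S" using finite_deps by auto
  have "nu \<gamma> (Conj p q) n = (\<Sum>i\<in>?S. (occ i p + occ i q) * \<gamma> i n)"
    using nu_sup[OF f, of "Conj p q"] by simp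
  also have "\<dots> = (\<Sum>i\<in>?S. occ i p * \<gamma> i n) + (\<Sum>i\<in>?S. occ i q * \<gamma> i n)"
    by (simp add: sum.distrib algebra_simps)
  also have "\<dots> = nu \<gamma> p n + nu \<gamma> q n"
    using nu_sup[OF f, of p] nu_sup[OF f, of q] by simp
  finally show ?thesis .
qed

lemma nu_disj: "nu \<gamma> (Disj p q) n = nu \<gamma> p n + nu \<gamma> q n"
proof -
  let ?S = "deps p \<union> deps q"
  have f: "finite ?S" using finite_deps by auto
  have "nu \<gamma> (Disj p q) n = (\<Sum>i\<in>?S. (occ i p + occ i q) * \<gamma> i n)"
    using nu_sup[OF f, of "Disj p q"] by simp
  also have "\<dots> = (\<Sum>i\<in>?S. occ i p * \<gamma> i n) + (\<Sum>i\<in>?S. occ i q * \<gamma> i n)"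
    by (simp add: sum.distrib algebra_simps)
  also have "\<dots> = nu \<gamma> p n + nu \<gamma> q n"
    using nu_sup[OF f, of p] nu_sup[OF f, of q] by simp
  finally show ?thesis .
qed

lemma team_finite:
  assumes "is_team M V X" "finite M"
  shows "finite X"
proof -
  have "X \<subseteq> {m. dom m = V \<and> ran m \<subseteq> M}" using assms unfolding is_team_def by auto
  moreover have "finite {m. dom m = V \<and> ran m \<subseteq> M}"
    using assms finite_set_of_finite_maps unfolding is_team_def by blast
  ultimately show ?thesis by (rule finite_subset)
qed

lemma team_ext:
  assumes "is_team M V X" "\<forall>s\<in>X. F s \<subseteq> M"
  shows "is_team M (insert v V) {s(v \<mapsto> m) | s m. s \<in> X \<and> m \<in> F s}"
  using assms unfolding is_team_def
  by (auto simp: ran_def split: if_splits) blast+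

lemma preimage:
  assumes "Y' \<subseteq> {s(v \<mapsto> m) | s m. s \<in> X \<and> m \<in> F s}" "finite Y'"
  shows "\<exists>Y\<subseteq>X. card Y \<le> card Y' \<and> Y' \<subseteq> {s(v \<mapsto> m) | s m. s \<in> Y \<and> m \<in> F s}"
proof -
  have "\<forall>t\<in>Y'. \<exists>p. fst p \<in> X \<and> snd p \<in> F (fst p) \<and> t = (fst p)(v \<mapsto> snd p)"
    using assms(1) by fastforce
  then obtain g where g: "\<forall>t\<in>Y'. fst (g t) \<in> X \<and> snd (g t) \<in> F (fst (g t)) \<and> t = (fst (g t))(v \<mapsto> snd (g t))"
    by metis
  let ?Y = "(fst \<circ> g) ` Y'"
  have "?Y \<subseteq> X" using g by auto
  moreover have "card ?Y \<le> card Y'" using assms(2) by (rule card_image_le)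
  moreover have "Y' \<subseteq> {s(v \<mapsto> m) | s m. s \<in> ?Y \<and> m \<in> F s}"
  proof
    fix t assume t: "t \<in> Y'"
    then show "t \<in> {s(v \<mapsto> m) | s m. s \<in> ?Y \<and> m \<in> F s}"
      using g by (intro CollectI exI[of _ "fst (g t)"] exI[of _ "snd (g t)"]) auto
  qed
  ultimately show ?thesis by blast
qed

lemma main:
  fixes \<phi> :: "('f, 'r, 'i, 'v) fml"
  assumes upw: "\<And>i. upwards_closed (ar i) (D i)"
    and bdd: "\<And>i. gamma_bounded TYPE('v) (ar i) (D i) (\<gamma> i)"
    and struct: "is_structure M FN" and fin: "finite M"
  shows "wf_deps ar \<phi> \<Longrightarrow> is_team M V X \<Longrightarrow> fv \<phi> \<subseteq> V \<Longrightarrow> sat M FN RL D X \<phi> \<Longrightarrow>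
    \<exists>Y\<subseteq>X. card Y \<le> nu \<gamma> \<phi> (card M) \<and> (\<forall>Z. Y \<subseteq> Z \<longrightarrow> Z \<subseteq> X \<longrightarrow> sat M FN RL D Z \<phi>)"
proof (induction \<phi> arbitrary: V X)
  case (Eq t u)
  then show ?case by (intro exI[of _ "{}"]) auto
next
  case (NEq t u)
  then show ?case by (intro exI[of _ "{}"]) auto
next
  case (Rel r ts)
  then show ?case by (intro exI[of _ "{}"]) auto
next
  case (NRel r ts)
  then show ?case by (intro exI[of _ "{}"]) auto
next
  case (Dep i vs)
  have Mne: "M \<noteq> {}" using struct unfolding is_structure_def by auto
  from bdd[of i] have "\<exists>Y\<subseteq>X. card Y \<le> \<gamma> i (card M) \<and> D i M (tuples Y vs)"
    unfolding gamma_bounded_def using Dep fin Mne by auto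
  then obtain Y where Y: "Y \<subseteq> X" "card Y \<le> \<gamma> i (card M)" "D i M (tuples Y vs)" by blast
  have nu: "nu \<gamma> (Dep i vs :: ('f, 'r, 'i, 'v) fml) (card M) = \<gamma> i (card M)" unfolding nu_def by simp
  have "sat M FN RL D Z (Dep i vs)" if "Y \<subseteq> Z" "Z \<subseteq> X" for Z
  proof -
    have "tuples Z vs \<subseteq> {xs. length xs = ar i \<and> set xs \<subseteq> M}"
    proof
      fix xs assume "xs \<in> tuples Z vs"
      then obtain s where s: "s \<in> Z" "xs = map (\<lambda>v. the (s v)) vs" unfolding tuples_def by auto
      have "s \<in> X" using s that by auto
      then have ds: "dom s = V" "ran s \<subseteq> M" using Dep.prems(2) unfolding is_team_def by auto
      have "the (s v) \<in> M" if "v \<in> set vs" for v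
      proof -
        have "v \<in> dom s" using that ds Dep.prems(3) by auto
        then obtain a where "s v = Some a" by auto
        then have "a \<in> ran s" by (auto simp: ran_def)
        with ds \<open>s v = Some a\<close> show ?thesis by auto
      qed
      then show "xs \<in> {xs. length xs = ar i \<and> set xs \<subseteq> M}"
        using s Dep.prems(1) by auto
    qed
    moreover have "tuples Y vs \<subseteq> tuples Z vs" using that unfolding tuples_def by auto
    ultimately show ?thesis using upw[of i] Y(3) unfolding upwards_closed_def by auto
  qed
  moreover have "card Y \<le> nu \<gamma> (Dep i vs :: ('f, 'r, 'i, 'v) fml) (card M)" using Y(2) nu by linarith
  ultimately show ?case using Y(1) by (intro exI[of _ Y]) auto
next
  case (Conj p q)
  from Conj.IH(1)[of V X] Conj.prems obtain Y1 where
    Y1: "Y1 \<subseteq> X" "card Y1 \<le> nu \<gamma> p (card M)" "\<forall>Z. Y1 \<subseteq> Z \<longrightarrow> Z \<subseteq> X \<longrightarrow> sat M FN RL D Z p"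
    by auto
  from Conj.IH(2)[of V X] Conj.prems obtain Y2 where
    Y2: "Y2 \<subseteq> X" "card Y2 \<le> nu \<gamma> q (card M)" "\<forall>Z. Y2 \<subseteq> Z \<longrightarrow> Z \<subseteq> X \<longrightarrow> sat M FN RL D Z q"
    by auto
  have fX: "finite X" using team_finite Conj.prems(2) fin by blast
  have "card (Y1 \<union> Y2) \<le> card Y1 + card Y2" by (rule card_Un_le)
  then have "card (Y1 \<union> Y2) \<le> nu \<gamma> (Conj p q) (card M)" using Y1 Y2 by (simp add: nu_conj)
  then show ?case using Y1 Y2 by (intro exI[of _ "Y1 \<union> Y2"]) auto
next
  case (Disj p q)
  from Disj.prems(4) obtain X1 X2 where X: "X = X1 \<union> X2" "sat M FN RL D X1 p" "sat M FN RL D X2 q"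
    by auto
  have t1: "is_team M V X1" and t2: "is_team M V X2"
    using Disj.prems(2) X(1) unfolding is_team_def by auto
  from Disj.IH(1)[of V X1] Disj.prems t1 X obtain Y1 where
    Y1: "Y1 \<subseteq> X1" "card Y1 \<le> nu \<gamma> p (card M)" "\<forall>Z. Y1 \<subseteq> Z \<longrightarrow> Z \<subseteq> X1 \<longrightarrow> sat M FN RL D Z p"
    by auto
  from Disj.IH(2)[of V X2] Disj.prems t2 X obtain Y2 where
    Y2: "Y2 \<subseteq> X2" "card Y2 \<le> nu \<gamma> q (card M)" "\<forall>Z. Y2 \<subseteq> Z \<longrightarrow> Z \<subseteq> X2 \<longrightarrow> sat M FN RL D Z q"
    by auto
  have "card (Y1 \<union> Y2) \<le> card Y1 + card Y2" by (rule card_Un_le)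
  then have c: "card (Y1 \<union> Y2) \<le> nu \<gamma> (Disj p q) (card M)" using Y1 Y2 by (simp add: nu_disj)
  have "sat M FN RL D Z (Disj p q)" if "Y1 \<union> Y2 \<subseteq> Z" "Z \<subseteq> X" for Z
  proof -
    have "Z = (Z \<inter> X1) \<union> (Z \<inter> X2)" using that X(1) by auto
    moreover have "sat M FN RL D (Z \<inter> X1) p" using Y1 that by auto
    moreover have "sat M FN RL D (Z \<inter> X2) q" using Y2 that by auto
    ultimately show ?thesis by auto
  qed
  then show ?case using c Y1 Y2 X(1) by (intro exI[of _ "Y1 \<union> Y2"]) auto
next
  case (Ex v p)
  have "\<exists>F. (\<forall>s\<in>X. F s \<subseteq> M \<and> F s \<noteq> {}) \<and>
    sat M FN RL D {s(v \<mapsto> m) | s m. s \<in> X \<and> m \<in> F s} p"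
    using Ex.prems(4) by (simp only: sat.simps)
  then obtain F where F: "\<forall>s\<in>X. F s \<subseteq> M \<and> F s \<noteq> {}"
    and sp: "sat M FN RL D {s(v \<mapsto> m) | s m. s \<in> X \<and> m \<in> F s} p" by blast
  let ?X' = "{s(v \<mapsto> m) | s m. s \<in> X \<and> m \<in> F s}"
  have t': "is_team M (insert v V) ?X'" by (rule team_ext[OF Ex.prems(2)]) (use F in blast)
  have fv': "fv p \<subseteq> insert v V" using Ex.prems(3) by auto
  from Ex.IH[OF _ t' fv' sp] Ex.prems(1) obtain Y' where
    Y': "Y' \<subseteq> ?X'" "card Y' \<le> nu \<gamma> p (card M)" "\<forall>Z. Y' \<subseteq> Z \<longrightarrow> Z \<subseteq> ?X' \<longrightarrow> sat M FN RL D Z p"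
    by auto
  have "finite ?X'" using team_finite[OF t' fin] .
  then have fY': "finite Y'" using Y'(1) finite_subset by blast
  from preimage[OF Y'(1) fY'] obtain Y where
    Y: "Y \<subseteq> X" "card Y \<le> card Y'" "Y' \<subseteq> {s(v \<mapsto> m) | s m. s \<in> Y \<and> m \<in> F s}" by blast
  have nu: "nu \<gamma> (Ex v p) (card M) = nu \<gamma> p (card M)" unfolding nu_def by simp
  have "sat M FN RL D Z (Ex v p)" if "Y \<subseteq> Z" "Z \<subseteq> X" for Z
  proof -
    have a: "Y' \<subseteq> {s(v \<mapsto> m) | s m. s \<in> Z \<and> m \<in> F s}" using Y(3) that by blast
    have b: "{s(v \<mapsto> m) | s m. s \<in> Z \<and> m \<in> F s} \<subseteq> ?X'" using that by blast
    have "sat M FN RL D {s(v \<mapsto> m) | s m. s \<in> Z \<and> m \<in> F s} p" using Y'(3) a b by blast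
    moreover have "\<forall>s\<in>Z. F s \<subseteq> M \<and> F s \<noteq> {}" using F that by auto
    ultimately show ?thesis by auto
  qed
  then show ?case using Y Y' nu by (intro exI[of _ Y]) auto
next
  case (All v p)
  let ?F = "\<lambda>s::'v \<rightharpoonup> 'm. M"
  have sp: "sat M FN RL D {s(v \<mapsto> m) | s m. s \<in> X \<and> m \<in> ?F s} p" using All.prems(4) by simp
  let ?X' = "{s(v \<mapsto> m) | s m. s \<in> X \<and> m \<in> ?F s}"
  have t': "is_team M (insert v V) ?X'" by (rule team_ext[OF All.prems(2)]) simp
  have fv': "fv p \<subseteq> insert v V" using All.prems(3) by auto
  from All.IH[OF _ t' fv' sp] All.prems(1) obtain Y' where
    Y': "Y' \<subseteq> ?X'" "card Y' \<le> nu \<gamma> p (card M)" "\<forall>Z. Y' \<subseteq> Z \<longrightarrow> Z \<subseteq> ?X' \<longrightarrow> sat M FN RL D Z p"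
    by auto
  have "finite ?X'" using team_finite[OF t' fin] .
  then have fY': "finite Y'" using Y'(1) finite_subset by blast
  from preimage[OF Y'(1) fY'] obtain Y where
    Y: "Y \<subseteq> X" "card Y \<le> card Y'" "Y' \<subseteq> {s(v \<mapsto> m) | s m. s \<in> Y \<and> m \<in> ?F s}" by blast
  have nu: "nu \<gamma> (All v p) (card M) = nu \<gamma> p (card M)" unfolding nu_def by simp
  have "sat M FN RL D Z (All v p)" if "Y \<subseteq> Z" "Z \<subseteq> X" for Z
  proof -
    have a: "Y' \<subseteq> {s(v \<mapsto> m) | s m. s \<in> Z \<and> m \<in> ?F s}" using Y(3) that by blast
    have b: "{s(v \<mapsto> m) | s m. s \<in> Z \<and> m \<in> ?F s} \<subseteq> ?X'" using that by blast
    have "sat M FN RL D {s(v \<mapsto> m) | s m. s \<in> Z \<and> m \<in> ?F s} p" using Y'(3) a b by blast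
    then show ?thesis by simp
  qed
  then show ?case using Y Y' nu by (intro exI[of _ Y]) auto
qed

theorem mainTheorem7:
  fixes ar :: "'i \<Rightarrow> nat"
    and D :: "'i \<Rightarrow> 'm set \<Rightarrow> 'm list set \<Rightarrow> bool"
    and \<gamma> :: "'i \<Rightarrow> nat \<Rightarrow> nat"
    and \<phi> :: "('f, 'r, 'i, 'v) fml"
    and M :: "'m set"
    and FN :: "'f \<Rightarrow> 'm list \<Rightarrow> 'm"
    and RL :: "'r \<Rightarrow> 'm list \<Rightarrow> bool"
    and V :: "'v set"
    and X :: "('v \<rightharpoonup> 'm) set"
  assumes notions: "\<And>i. dep_notion (ar i) (D i)"
    and upw: "\<And>i. upwards_closed (ar i) (D i)"
    and bdd: "\<And>i. gamma_bounded TYPE('v) (ar i) (D i) (\<gamma> i)"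
    and wf: "wf_deps ar \<phi>"
    and struct: "is_structure M FN" and fin: "finite M"
    and team: "is_team M V X" and fvs: "fv \<phi> \<subseteq> V"
    and sat: "sat M FN RL D X \<phi>"
  shows "\<exists>Y\<subseteq>X. card Y \<le> nu \<gamma> \<phi> (card M) \<and> sat M FN RL D Y \<phi>"
  using main[OF upw bdd struct fin wf team fvs sat] by blast

end
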